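(* Let $g:[a,b]\to\mathbb R$ be increasing, continuous at $a$ and at $b$, and left-continuous at every point of $(a,b)$. Let $f:[a,b]\to\mathbb R$ be $g$-Lipschitz continuous with Lipschitz constant $H$. If $g^C$ is Lipschitz continuous with Lipschitz constant $H$, then $f^C$ is Lipschitz continuous with Lipschitz constant $H^2$.
   Context: For a function $\varphi:[a,b]\to\mathbb R$ having right limits, $\Delta^+\varphi(t)=\varphi(t^+)-\varphi(t)$, its jump part is $\varphi^B(t)=\sum_{s\in[a,t)}\Delta^+\varphi(s)$ and its continuous part is $\varphi^C=\varphi-\varphi^B$. $f$ is $g$-Lipschitz continuous with constant $H$ if $|f(t)-f(s)|\le H|g(t)-g(s)|$ for all $t,s\in[a,b]$. *)

theory Defs
  imports "HOL-Analysis.Analysis"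
begin

definition right_jump :: "(real \<Rightarrow> real) \<Rightarrow> real \<Rightarrow> real" where
  "right_jump phi t = Lim (at_right t) phi - phi t"

definition jump_part :: "real \<Rightarrow> (real \<Rightarrow> real) \<Rightarrow> real \<Rightarrow> real" where
  "jump_part a phi t = infsum (right_jump phi) {a..<t}"

definition cont_part :: "real \<Rightarrow> (real \<Rightarrow> real) \<Rightarrow> real \<Rightarrow> real" where
  "cont_part a phi t = phi t - jump_part a phi t"

definition g_lipschitz_on :: "real \<Rightarrow> real \<Rightarrow> (real \<Rightarrow> real) \<Rightarrow> real \<Rightarrow> (real \<Rightarrow> real) \<Rightarrow> bool" where
  "g_lipschitz_on a b g H f \<longleftrightarrow>
     (\<forall>t\<in>{a..b}. \<forall>s\<in>{a..b}. \<bar>f t - f s\<bar> \<le> H * \<bar>g t - g s\<bar>)"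

end

theory Submission
  imports Defs
begin

lemma rl:
  fixes phi :: "real \<Rightarrow> real"
  assumes m: "mono_on {a..b} phi" and u: "a \<le> u" "u < b"
  shows "\<exists>L. (phi \<longlongrightarrow> L) (at_right u) \<and> phi u \<le> L \<and> (\<forall>v\<in>{u<..b}. L \<le> phi v)"
proof -
  have mono: "\<And>x y. x \<in> {a..b} \<Longrightarrow> y \<in> {a..b} \<Longrightarrow> u < x \<Longrightarrow> x \<le> y \<Longrightarrow> phi x \<le> phi y"
    using m by (auto simp: mono_on_def)
  have bnd: "\<And>x. x \<in> {a..b} \<Longrightarrow> u < x \<Longrightarrow> phi u \<le> phi x"
    using m u by (auto simp: mono_on_def)
  define L where "L = Inf (phi ` ({u<..} \<inter> {a..b}))"
  have t: "(phi \<longlongrightarrow> L) (at u within ({u<..} \<inter> {a..b}))"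
    unfolding L_def by (rule Lim_right_bound[OF mono bnd])
  have eq: "at u within ({u<..} \<inter> {a..b}) = at u within {u<..}"
    by (rule at_within_nhd[where S="{..<b}"]) (use u in auto)
  have t2: "(phi \<longlongrightarrow> L) (at_right u)" using t eq by simp
  have ev: "\<forall>\<^sub>F x in at_right u. x \<in> {u<..<b}"
    using u by (simp add: eventually_at_right_field) (metis dist_real_def)
  have "phi u \<le> L"
  proof (rule tendsto_lowerbound[OF t2])
    show "\<forall>\<^sub>F x in at_right u. phi u \<le> phi x"
      using ev by eventually_elim (use bnd u in auto)
  qed simp
  moreover have "\<forall>v\<in>{u<..b}. L \<le> phi v"
  proof
    fix v assume v: "v \<in> {u<..b}"
    have ev2: "\<forall>\<^sub>F x in at_right u. x \<in> {u<..<v}"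
      using v by (simp add: eventually_at_right_field) (metis dist_real_def)
    show "L \<le> phi v"
    proof (rule tendsto_upperbound[OF t2])
      show "\<forall>\<^sub>F x in at_right u. phi x \<le> phi v"
        using ev2 by eventually_elim (use mono u v in auto)
    qed simp
  qed
  ultimately show ?thesis using t2 by blast
qed

lemma rj:
  fixes phi :: "real \<Rightarrow> real"
  assumes m: "mono_on {a..b} phi" and u: "a \<le> u" "u < b"
  shows "(phi \<longlongrightarrow> phi u + right_jump phi u) (at_right u)"
    "0 \<le> right_jump phi u" "\<And>v. v \<in> {u<..b} \<Longrightarrow> phi u + right_jump phi u \<le> phi v"
proof -
  obtain L where L: "(phi \<longlongrightarrow> L) (at_right u)" "phi u \<le> L" "\<forall>v\<in>{u<..b}. L \<le> phi v"
    using rl[OF m u] by blast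
  have "Lim (at_right u) phi = L" using L(1) by (simp add: tendsto_Lim)
  hence e: "phi u + right_jump phi u = L" by (simp add: right_jump_def)
  show "(phi \<longlongrightarrow> phi u + right_jump phi u) (at_right u)" using e L by simp
  show "0 \<le> right_jump phi u" using e L by simp
  show "\<And>v. v \<in> {u<..b} \<Longrightarrow> phi u + right_jump phi u \<le> phi v" using e L by simp
qed

lemma fin:
  fixes phi :: "real \<Rightarrow> real"
  assumes m: "mono_on {a..b} phi" and F: "finite F" and s: "a \<le> s"
  shows "\<forall>t. F \<subseteq> {s..<t} \<longrightarrow> s \<le> t \<longrightarrow> t \<le> b \<longrightarrow> sum (right_jump phi) F \<le> phi t - phi s"
  using F
proof (induction rule: finite_linorder_max_induct)
  case empty
  then show ?case using m s by (auto simp: mono_on_def)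
next
  case (insert c A)
  show ?case
  proof (intro allI impI)
    fix t assume t: "insert c A \<subseteq> {s..<t}" "s \<le> t" "t \<le> b"
    have "A \<subseteq> {s..<c}" using t insert.hyps(2) by auto
    hence IH: "sum (right_jump phi) A \<le> phi c - phi s" using insert.IH t by auto
    have c: "a \<le> c" "c < b" "c < t" using t s by auto
    have "phi c + right_jump phi c \<le> phi t" using rj(3)[OF m c(1,2)] c t by auto
    moreover have "c \<notin> A" using insert.hyps(2) by auto
    ultimately show "sum (right_jump phi) (insert c A) \<le> phi t - phi s"
      using IH insert.hyps(1) by simp
  qed
qed

lemma summ:
  fixes phi :: "real \<Rightarrow> real"
  assumes m: "mono_on {a..b} phi" and st: "a \<le> s" "s \<le> t" "t \<le> b"
  shows "right_jump phi summable_on {s..<t}"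
    "infsum (right_jump phi) {s..<t} \<le> phi t - phi s"
    "0 \<le> infsum (right_jump phi) {s..<t}"
proof -
  have nn: "\<And>x. x \<in> {s..<t} \<Longrightarrow> 0 \<le> right_jump phi x"
    using rj(2)[OF m] st by auto
  have fs: "\<And>F. finite F \<Longrightarrow> F \<subseteq> {s..<t} \<Longrightarrow> sum (right_jump phi) F \<le> phi t - phi s"
    using fin[OF m _ st(1)] st by blast
  show sm: "right_jump phi summable_on {s..<t}"
    by (rule nonneg_bdd_above_summable_on[OF nn]) (use fs in \<open>auto intro!: bdd_aboveI\<close>)
  show "infsum (right_jump phi) {s..<t} \<le> phi t - phi s"
    by (rule infsum_le_finite_sums[OF sm fs])
  show "0 \<le> infsum (right_jump phi) {s..<t}" by (rule infsum_nonneg[OF nn])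
qed

lemma cp:
  fixes psi :: "real \<Rightarrow> real"
  assumes sm: "right_jump psi summable_on {a..<t}" and st: "a \<le> s" "s \<le> t"
  shows "cont_part a psi t - cont_part a psi s = psi t - psi s - infsum (right_jump psi) {s..<t}"
proof -
  have u: "{a..<t} = {a..<s} \<union> {s..<t}" using st by auto
  have s1: "right_jump psi summable_on {a..<s}" by (rule summable_on_subset[OF sm]) (use st in auto)
  have s2: "right_jump psi summable_on {s..<t}" by (rule summable_on_subset[OF sm]) (use st in auto)
  have "infsum (right_jump psi) {a..<t} = infsum (right_jump psi) {a..<s} + infsum (right_jump psi) {s..<t}"
    unfolding u by (rule infsum_Un_disjoint[OF s1 s2]) auto
  thus ?thesis by (simp add: cont_part_def jump_part_def)
qed

theorem mainTheorem6:
  fixes f g :: "real \<Rightarrow> real" and a b H :: real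
  assumes "mono_on {a..b} g"
    and "continuous (at a within {a..b}) g"
    and "continuous (at b within {a..b}) g"
    and "\<And>t. t \<in> {a<..<b} \<Longrightarrow> continuous (at_left t) g"
    and "g_lipschitz_on a b g H f"
    and "H-lipschitz_on {a..b} (cont_part a g)"
  shows "(H\<^sup>2)-lipschitz_on {a..b} (cont_part a f)"
proof -
  note mg = assms(1)
  have H0: "0 \<le> H" using assms(6) by (rule lipschitz_on_nonneg)
  have fl: "\<bar>f y - f x\<bar> \<le> H * (g y - g x)" if "x \<in> {a..b}" "y \<in> {a..b}" "x \<le> y" for x y
  proof -
    have "g x \<le> g y" using mg that by (auto simp: mono_on_def)
    moreover have "\<bar>f y - f x\<bar> \<le> H * \<bar>g y - g x\<bar>" using assms(5) that by (auto simp: g_lipschitz_on_def)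
    ultimately show ?thesis by simp
  qed
  define h where "h = (\<lambda>x. H * g x - f x)"
  define k where "k = (\<lambda>x. H * g x + f x)"
  have mh: "mono_on {a..b} h"
  proof (rule mono_onI)
    fix x y assume "x \<in> {a..b}" "y \<in> {a..b}" "x \<le> y"
    from fl[OF this] show "h x \<le> h y" unfolding h_def by (simp add: abs_le_iff algebra_simps)
  qed
  have mk: "mono_on {a..b} k"
  proof (rule mono_onI)
    fix x y assume "x \<in> {a..b}" "y \<in> {a..b}" "x \<le> y"
    from fl[OF this] show "k x \<le> k y" unfolding k_def by (simp add: abs_le_iff algebra_simps)
  qed
  have f1: "f = (\<lambda>x. H * g x - h x)" by (auto simp: h_def)
  have f2: "f = (\<lambda>x. k x - H * g x)" by (auto simp: k_def)
  have jf1: "right_jump f u = H * right_jump g u - right_jump h u"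
    and jf2: "right_jump f u = right_jump k u - H * right_jump g u"
    if u: "u \<in> {a..<b}" for u
  proof -
    have tg: "(g \<longlongrightarrow> g u + right_jump g u) (at_right u)" using rj(1)[OF mg] u by auto
    have th: "(h \<longlongrightarrow> h u + right_jump h u) (at_right u)" using rj(1)[OF mh] u by auto
    have tk: "(k \<longlongrightarrow> k u + right_jump k u) (at_right u)" using rj(1)[OF mk] u by auto
    have "((\<lambda>x. H * g x - h x) \<longlongrightarrow> H * (g u + right_jump g u) - (h u + right_jump h u)) (at_right u)"
      by (intro tendsto_intros tg th)
    hence "Lim (at_right u) f = H * (g u + right_jump g u) - (h u + right_jump h u)"
      by (simp add: f1[symmetric] tendsto_Lim)
    thus "right_jump f u = H * right_jump g u - right_jump h u"
      by (simp add: right_jump_def h_def algebra_simps)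
    have "((\<lambda>x. k x - H * g x) \<longlongrightarrow> (k u + right_jump k u) - H * (g u + right_jump g u)) (at_right u)"
      by (intro tendsto_intros tg tk)
    hence "Lim (at_right u) f = (k u + right_jump k u) - H * (g u + right_jump g u)"
      by (simp add: f2[symmetric] tendsto_Lim)
    thus "right_jump f u = right_jump k u - H * right_jump g u"
      by (simp add: right_jump_def k_def algebra_simps)
  qed
  have key: "\<bar>cont_part a f t - cont_part a f s\<bar> \<le> H\<^sup>2 * (t - s)"
    if st: "s \<in> {a..b}" "t \<in> {a..b}" "s \<le> t" for s t
  proof -
    have sgA: "right_jump g summable_on {a..<t}" using summ(1)[OF mg] st by auto
    have shA: "right_jump h summable_on {a..<t}" using summ(1)[OF mh] st by auto
    have skA: "right_jump k summable_on {a..<t}" using summ(1)[OF mk] st by auto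
    have sg: "right_jump g summable_on {s..<t}" using summ(1)[OF mg] st by auto
    have sh: "right_jump h summable_on {s..<t}" using summ(1)[OF mh] st by auto
    have sk: "right_jump k summable_on {s..<t}" using summ(1)[OF mk] st by auto
    have cg: "(\<lambda>u. H * right_jump g u) summable_on {a..<t}" by (rule summable_on_cmult_right[OF sgA])
    have "(\<lambda>u. H * right_jump g u + - right_jump h u) summable_on {a..<t}"
      by (intro summable_on_add cg) (simp add: summable_on_uminus shA)
    hence sfA: "right_jump f summable_on {a..<t}"
      by (rule summable_on_cong[THEN iffD1, rotated]) (use jf1 st in auto)
    have If1: "infsum (right_jump f) {s..<t} = H * infsum (right_jump g) {s..<t} - infsum (right_jump h) {s..<t}"
    proof -
      have "infsum (right_jump f) {s..<t} = infsum (\<lambda>u. H * right_jump g u + - right_jump h u) {s..<t}"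
        by (rule infsum_cong) (use jf1 st in auto)
      also have "\<dots> = H * infsum (right_jump g) {s..<t} - infsum (right_jump h) {s..<t}"
        by (subst infsum_add) (auto simp: summable_on_cmult_right[OF sg] summable_on_uminus sh
            infsum_cmult_right' infsum_uminus)
      finally show ?thesis .
    qed
    have If2: "infsum (right_jump f) {s..<t} = infsum (right_jump k) {s..<t} - H * infsum (right_jump g) {s..<t}"
    proof -
      have "infsum (right_jump f) {s..<t} = infsum (\<lambda>u. right_jump k u + - (H * right_jump g u)) {s..<t}"
        by (rule infsum_cong) (use jf2 st in auto)
      also have "\<dots> = infsum (right_jump k) {s..<t} - H * infsum (right_jump g) {s..<t}"
        by (subst infsum_add) (auto simp: summable_on_cmult_right[OF sg] summable_on_uminus sk
            infsum_cmult_right' infsum_uminus)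
      finally show ?thesis .
    qed
    have Ih: "infsum (right_jump h) {s..<t} \<le> h t - h s" using summ(2)[OF mh] st by auto
    have Ik: "infsum (right_jump k) {s..<t} \<le> k t - k s" using summ(2)[OF mk] st by auto
    have Df: "cont_part a f t - cont_part a f s = f t - f s - infsum (right_jump f) {s..<t}"
      using cp[OF sfA] st by auto
    have Dg: "cont_part a g t - cont_part a g s = g t - g s - infsum (right_jump g) {s..<t}"
      using cp[OF sgA] st by auto
    have lg: "dist (cont_part a g t) (cont_part a g s) \<le> H * dist t s"
      using lipschitz_onD[OF assms(6)] st by auto
    hence lg': "cont_part a g t - cont_part a g s \<le> H * (t - s)"
      using st by (simp add: dist_real_def)
    have up: "cont_part a f t - cont_part a f s \<le> H * (cont_part a g t - cont_part a g s)"
    proof -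
      have e: "H * (cont_part a g t - cont_part a g s) = H * g t - H * g s - H * infsum (right_jump g) {s..<t}"
        using Dg by (simp add: right_diff_distrib)
      have "h t = H * g t - f t" "h s = H * g s - f s" by (simp_all add: h_def)
      thus ?thesis using Df If1 Ih e by linarith
    qed
    have lo: "- (H * (cont_part a g t - cont_part a g s)) \<le> cont_part a f t - cont_part a f s"
    proof -
      have e: "H * (cont_part a g t - cont_part a g s) = H * g t - H * g s - H * infsum (right_jump g) {s..<t}"
        using Dg by (simp add: right_diff_distrib)
      have "k t = H * g t + f t" "k s = H * g s + f s" by (simp_all add: k_def)
      thus ?thesis using Df If2 Ik e by linarith
    qed
    have "H * (cont_part a g t - cont_part a g s) \<le> H * (H * (t - s))"
      using lg' H0 by (rule mult_left_mono)
    hence "H * (cont_part a g t - cont_part a g s) \<le> H\<^sup>2 * (t - s)" by (simp add: power2_eq_square)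
    thus ?thesis using up lo by linarith
  qed
  show ?thesis
  proof (rule lipschitz_onI)
    show "0 \<le> H\<^sup>2" by simp
    fix x y assume xy: "x \<in> {a..b}" "y \<in> {a..b}"
    show "dist (cont_part a f x) (cont_part a f y) \<le> H\<^sup>2 * dist x y"
    proof (cases "x \<le> y")
      case True
      then show ?thesis using key[OF xy(1,2) True] by (simp add: dist_real_def abs_minus_commute)
    next
      case False
      then show ?thesis using key[OF xy(2,1)] by (simp add: dist_real_def)
    qed
  qed
qed

end
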